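(* Let $k$ be an algebraically closed field of characteristic $2$, $f = x^2+y^2z+yz^2$, $m \geq 5$, $R_m = k[x_0,\dots,x_m,y_0,\dots,y_m,z_0,\dots,z_m]$, and $(\mathbb{A}^3)_m = \mathrm{Spec}\, R_m$. Define $f^{(j)}\in R_m$ ($0\le j\le m$) by $f(\sum_{i=0}^m x_it^i,\sum_{i=0}^m y_it^i,\sum_{i=0}^m z_it^i) = \sum_{j=0}^m f^{(j)}t^j$ in $R_m[t]/\langle t^{m+1}\rangle$. Define the ideals $I_m^0 = \langle x_0,x_1,x_2,y_0,y_1,z_0,z_1\rangle + \langle f^{(0)},\dots,f^{(m)}\rangle$, $I_m^1 = J_m^1 (R_m)_{z_1}\cap R_m$, $I_m^2 = J_m^2 (R_m)_{y_1}\cap R_m$, $I_m^3 = J_m^3 (R_m)_{y_1}\cap R_m$, where $J_m^1 = \langle x_0,x_1,y_0,y_1,z_0\rangle + \langle f^{(0)},\dots,f^{(m)}\rangle$, $J_m^2 = \langle x_0,x_1,y_0,z_0,z_1\rangle + \langle f^{(0)},\dots,f^{(m)}\rangle$, $J_m^3 = \langle x_0,x_1,y_0,z_0,y_1+z_1\rangle + \langle f^{(0)},\dots,f^{(m)}\rangle$, and let $Z_m^i = \mathbf{V}(I_m^i)\subseteq (\mathbb{A}^3)_m$ for $i=0,1,2,3$. Let $\psi_1,\psi_2$ be the automorphisms of $(\mathbb{A}^3)_m$ corresponding to the $k$-algebra automorphisms $\varphi_1,\varphi_2$ of $R_m$ given by $\varphi_1: x_i\mapsto x_i,\ y_i\mapsto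 z_i,\ z_i\mapsto y_i$ and $\varphi_2: x_i\mapsto x_i,\ y_i\mapsto y_i,\ z_i\mapsto y_i+z_i$ (for all $i$). Then (1) $\psi_1(Z_m^0)=Z_m^0$, $\psi_1(Z_m^1)=Z_m^2$, $\psi_1(Z_m^2)=Z_m^1$, $\psi_1(Z_m^3)=Z_m^3$; (2) $\psi_2(Z_m^0)=Z_m^0$, $\psi_2(Z_m^1)=Z_m^1$, $\psi_2(Z_m^2)=Z_m^3$, $\psi_2(Z_m^3)=Z_m^2$.
   Context: $(R_m)_h$ is the localization of $R_m$ at powers of $h$, and $J\cdot(R_m)_h\cap R_m$ denotes the preimage in $R_m$ of the extended ideal. $\mathbf{V}(I)$ is the zero set of the ideal $I$ in $(\mathbb{A}^3)_m$. *)

theory Defs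
  imports "HOL-Library.Poly_Mapping" "HOL-Computational_Algebra.Polynomial"
begin

datatype var = X nat | Y nat | Z nat

fun vidx :: "var \<Rightarrow> nat" where
  "vidx (X i) = i" | "vidx (Y i) = i" | "vidx (Z i) = i"

type_synonym 'k mpoly = "(var \<Rightarrow>\<^sub>0 nat) \<Rightarrow>\<^sub>0 'k"

definition Var :: "var \<Rightarrow> 'k::comm_ring_1 mpoly" where
  "Var v = Poly_Mapping.single (Poly_Mapping.single v 1) 1"

definition Const :: "'k::comm_ring_1 \<Rightarrow> 'k mpoly" where
  "Const c = Poly_Mapping.single 0 c"

definition Rm :: "nat \<Rightarrow> 'k::comm_ring_1 mpoly set" where
  "Rm m = {p. \<forall>mon \<in> Poly_Mapping.keys p. \<forall>v \<in> Poly_Mapping.keys mon. vidx v \<le> m}"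

definition fpoly :: "'a::comm_ring_1 \<Rightarrow> 'a \<Rightarrow> 'a \<Rightarrow> 'a" where
  "fpoly x y z = x^2 + y^2 * z + y * z^2"

definition arc :: "(nat \<Rightarrow> var) \<Rightarrow> nat \<Rightarrow> 'k::comm_ring_1 mpoly poly" where
  "arc c m = (\<Sum>i\<le>m. monom (Var (c i)) i)"

text \<open>f^(j) = coefficient of t^j of f(x(t),y(t),z(t)); for j \<le> m this is the
  coefficient in R_m[t]/(t^(m+1)).\<close>
definition fj :: "nat \<Rightarrow> nat \<Rightarrow> 'k::comm_ring_1 mpoly" where
  "fj m j = coeff (fpoly (arc X m) (arc Y m) (arc Z m)) j"

definition Fm :: "nat \<Rightarrow> 'k::comm_ring_1 mpoly set" where
  "Fm m = fj m ` {0..m}"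

definition gen_ideal :: "'a::comm_ring_1 set \<Rightarrow> 'a set \<Rightarrow> 'a set" where
  "gen_ideal S G = {p. \<exists>F r. finite F \<and> F \<subseteq> G \<and> (\<forall>g\<in>F. r g \<in> S) \<and>
                         p = (\<Sum>g\<in>F. r g * g)}"

text \<open>J (S)_h \<inter> S: preimage in S (a domain) of the extension of J to S
  localized at powers of h.\<close>
definition sat :: "'a::comm_ring_1 set \<Rightarrow> 'a set \<Rightarrow> 'a \<Rightarrow> 'a set" where
  "sat S J h = {p \<in> S. \<exists>n::nat. h ^ n * p \<in> J}"

definition is_prime_ideal :: "'a::comm_ring_1 set \<Rightarrow> 'a set \<Rightarrow> bool" where
  "is_prime_ideal S P \<longleftrightarrow> P \<subseteq> S \<and> 0 \<in> P \<and>
     (\<forall>a\<in>P. \<forall>b\<in>P. a + b \<in> P) \<and> (\<forall>a\<in>P. \<forall>r\<in>S. r * a \<in> P) \<and>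
     1 \<notin> P \<and> (\<forall>a\<in>S. \<forall>b\<in>S. a * b \<in> P \<longrightarrow> a \<in> P \<or> b \<in> P)"

definition Spec :: "'a::comm_ring_1 set \<Rightarrow> 'a set set" where
  "Spec S = {P. is_prime_ideal S P}"

definition zero_set :: "'a::comm_ring_1 set \<Rightarrow> 'a set \<Rightarrow> 'a set set" where
  "zero_set S I = {P \<in> Spec S. I \<subseteq> P}"

definition spec_map :: "'a::comm_ring_1 set \<Rightarrow> ('a \<Rightarrow> 'a) \<Rightarrow> 'a set \<Rightarrow> 'a set" where
  "spec_map S \<phi> P = {p \<in> S. \<phi> p \<in> P}"

definition subst :: "(var \<Rightarrow> 'k::comm_ring_1 mpoly) \<Rightarrow> 'k mpoly \<Rightarrow> 'k mpoly" where
  "subst \<sigma> p = (\<Sum>mon\<in>Poly_Mapping.keys p. Const (Poly_Mapping.lookup p mon) *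
                    (\<Prod>v\<in>Poly_Mapping.keys mon. \<sigma> v ^ Poly_Mapping.lookup mon v))"

fun \<sigma>1 :: "var \<Rightarrow> 'k::comm_ring_1 mpoly" where
  "\<sigma>1 (X i) = Var (X i)" | "\<sigma>1 (Y i) = Var (Z i)" | "\<sigma>1 (Z i) = Var (Y i)"

fun \<sigma>2 :: "var \<Rightarrow> 'k::comm_ring_1 mpoly" where
  "\<sigma>2 (X i) = Var (X i)" | "\<sigma>2 (Y i) = Var (Y i)" | "\<sigma>2 (Z i) = Var (Y i) + Var (Z i)"

definition \<phi>1 :: "'k::comm_ring_1 mpoly \<Rightarrow> 'k mpoly" where "\<phi>1 = subst \<sigma>1"
definition \<phi>2 :: "'k::comm_ring_1 mpoly \<Rightarrow> 'k mpoly" where "\<phi>2 = subst \<sigma>2"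

definition \<psi>1 :: "nat \<Rightarrow> 'k::comm_ring_1 mpoly set \<Rightarrow> 'k mpoly set" where
  "\<psi>1 m = spec_map (Rm m) \<phi>1"
definition \<psi>2 :: "nat \<Rightarrow> 'k::comm_ring_1 mpoly set \<Rightarrow> 'k mpoly set" where
  "\<psi>2 m = spec_map (Rm m) \<phi>2"

definition Im0 :: "nat \<Rightarrow> 'k::comm_ring_1 mpoly set" where
  "Im0 m = gen_ideal (Rm m) ({Var (X 0), Var (X 1), Var (X 2), Var (Y 0), Var (Y 1),
                              Var (Z 0), Var (Z 1)} \<union> Fm m)"

definition Jm1 :: "nat \<Rightarrow> 'k::comm_ring_1 mpoly set" where
  "Jm1 m = gen_ideal (Rm m) ({Var (X 0), Var (X 1), Var (Y 0), Var (Y 1), Var (Z 0)} \<union> Fm m)"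
definition Jm2 :: "nat \<Rightarrow> 'k::comm_ring_1 mpoly set" where
  "Jm2 m = gen_ideal (Rm m) ({Var (X 0), Var (X 1), Var (Y 0), Var (Z 0), Var (Z 1)} \<union> Fm m)"
definition Jm3 :: "nat \<Rightarrow> 'k::comm_ring_1 mpoly set" where
  "Jm3 m = gen_ideal (Rm m) ({Var (X 0), Var (X 1), Var (Y 0), Var (Z 0),
                              Var (Y 1) + Var (Z 1)} \<union> Fm m)"

definition Im1 :: "nat \<Rightarrow> 'k::comm_ring_1 mpoly set" where
  "Im1 m = sat (Rm m) (Jm1 m) (Var (Z 1))"
definition Im2 :: "nat \<Rightarrow> 'k::comm_ring_1 mpoly set" where
  "Im2 m = sat (Rm m) (Jm2 m) (Var (Y 1))"
definition Im3 :: "nat \<Rightarrow> 'k::comm_ring_1 mpoly set" where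
  "Im3 m = sat (Rm m) (Jm3 m) (Var (Y 1))"

definition Zm :: "nat \<Rightarrow> nat \<Rightarrow> 'k::comm_ring_1 mpoly set set" where
  "Zm m i = zero_set (Rm m) (if i = 0 then Im0 m else if i = 1 then Im1 m
                              else if i = 2 then Im2 m else Im3 m)"

end

theory Submission
  imports Defs
begin


definition rhom :: "('a::comm_ring_1 \<Rightarrow> 'b::comm_ring_1) \<Rightarrow> bool" where
  "rhom f \<longleftrightarrow> f 0 = 0 \<and> f 1 = 1 \<and> (\<forall>a b. f (a + b) = f a + f b) \<and> (\<forall>a b. f (a * b) = f a * f b)"

lemma rhom_0: "rhom f \<Longrightarrow> f 0 = 0" by (simp add: rhom_def)
lemma rhom_1: "rhom f \<Longrightarrow> f 1 = 1" by (simp add: rhom_def)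
lemma rhom_add: "rhom f \<Longrightarrow> f (a + b) = f a + f b" by (simp add: rhom_def)
lemma rhom_mult: "rhom f \<Longrightarrow> f (a * b) = f a * f b" by (simp add: rhom_def)

lemma rhom_sum: "rhom f \<Longrightarrow> f (sum g A) = (\<Sum>x\<in>A. f (g x))"
  by (induct A rule: infinite_finite_induct) (auto simp: rhom_0 rhom_add)
lemma rhom_prod: "rhom f \<Longrightarrow> f (prod g A) = (\<Prod>x\<in>A. f (g x))"
  by (induct A rule: infinite_finite_induct) (auto simp: rhom_1 rhom_mult)
lemma rhom_power: "rhom f \<Longrightarrow> f (a ^ n) = f a ^ n"
  by (induct n) (auto simp: rhom_1 rhom_mult)
lemma rhom_uminus: "rhom f \<Longrightarrow> f (- a) = - f a"
proof -
  assume h: "rhom f"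
  have "f (- a) + f a = 0" using rhom_add[OF h, of "-a" a] rhom_0[OF h] by simp
  then show ?thesis by (simp add: eq_neg_iff_add_eq_0)
qed

lemma Const_0 [simp]: "Const 0 = 0" by (simp add: Const_def)
lemma Const_1 [simp]: "Const 1 = 1" by (simp add: Const_def)
lemma Const_add: "Const (a + b) = Const a + Const b" by (simp add: Const_def single_add)
lemma Const_mult: "Const (a * b) = Const a * Const b" by (simp add: Const_def mult_single)

definition Mon :: "(var \<Rightarrow> 'k::comm_ring_1 mpoly) \<Rightarrow> (var \<Rightarrow>\<^sub>0 nat) \<Rightarrow> 'k mpoly" where
  "Mon \<sigma> mon = (\<Prod>v\<in>Poly_Mapping.keys mon. \<sigma> v ^ Poly_Mapping.lookup mon v)"

lemma subst_Mon: "subst \<sigma> p = (\<Sum>mon\<in>Poly_Mapping.keys p. Const (Poly_Mapping.lookup p mon) * Mon \<sigma> mon)"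
  by (simp add: subst_def Mon_def)

lemma subst_superset:
  assumes "finite K" "Poly_Mapping.keys p \<subseteq> K"
  shows "subst \<sigma> p = (\<Sum>mon\<in>K. Const (Poly_Mapping.lookup p mon) * Mon \<sigma> mon)"
  unfolding subst_Mon
  by (rule sum.mono_neutral_left) (use assms in \<open>auto simp: in_keys_iff\<close>)

lemma Mon_superset:
  assumes "finite K" "Poly_Mapping.keys mon \<subseteq> K"
  shows "Mon \<sigma> mon = (\<Prod>v\<in>K. \<sigma> v ^ Poly_Mapping.lookup mon v)"
  unfolding Mon_def
  by (rule prod.mono_neutral_left) (use assms in \<open>auto simp: in_keys_iff\<close>)

lemma Mon_add: "Mon \<sigma> (a + b) = Mon \<sigma> a * Mon \<sigma> b"
proof -
  let ?K = "Poly_Mapping.keys a \<union> Poly_Mapping.keys b"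
  have "Mon \<sigma> (a + b) = (\<Prod>v\<in>?K. \<sigma> v ^ Poly_Mapping.lookup (a + b) v)"
    by (rule Mon_superset) (use keys_add[of a b] in auto)
  also have "\<dots> = (\<Prod>v\<in>?K. \<sigma> v ^ Poly_Mapping.lookup a v) * (\<Prod>v\<in>?K. \<sigma> v ^ Poly_Mapping.lookup b v)"
    by (simp add: lookup_add power_add prod.distrib)
  also have "\<dots> = Mon \<sigma> a * Mon \<sigma> b"
    by (simp add: Mon_superset[symmetric])
  finally show ?thesis .
qed

lemma Mon_0 [simp]: "Mon \<sigma> 0 = 1" by (simp add: Mon_def)

lemma subst_0 [simp]: "subst \<sigma> 0 = 0" by (simp add: subst_def)

lemma subst_add: "subst \<sigma> (p + q) = subst \<sigma> p + subst \<sigma> q"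
proof -
  let ?K = "Poly_Mapping.keys p \<union> Poly_Mapping.keys q"
  have "subst \<sigma> (p + q) = (\<Sum>mon\<in>?K. Const (Poly_Mapping.lookup (p + q) mon) * Mon \<sigma> mon)"
    by (rule subst_superset) (use keys_add[of p q] in auto)
  also have "\<dots> = (\<Sum>mon\<in>?K. Const (Poly_Mapping.lookup p mon) * Mon \<sigma> mon) + (\<Sum>mon\<in>?K. Const (Poly_Mapping.lookup q mon) * Mon \<sigma> mon)"
    by (simp add: lookup_add Const_add distrib_right sum.distrib)
  also have "\<dots> = subst \<sigma> p + subst \<sigma> q"
    by (simp add: subst_superset[symmetric])
  finally show ?thesis .
qed

lemma subst_sum: "subst \<sigma> (sum g A) = (\<Sum>x\<in>A. subst \<sigma> (g x))"
  by (induct A rule: infinite_finite_induct) (auto simp: subst_add)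

lemma subst_single: "subst \<sigma> (Poly_Mapping.single a c) = Const c * Mon \<sigma> a"
  by (simp add: subst_Mon)

lemma pm_expand: "p = (\<Sum>a\<in>Poly_Mapping.keys p. Poly_Mapping.single a (Poly_Mapping.lookup p a))"
proof (rule poly_mapping_eqI)
  fix k
  show "Poly_Mapping.lookup p k = Poly_Mapping.lookup (\<Sum>a\<in>Poly_Mapping.keys p. Poly_Mapping.single a (Poly_Mapping.lookup p a)) k"
    by (cases "k \<in> Poly_Mapping.keys p") (auto simp: lookup_sum lookup_single when_def in_keys_iff)
qed

lemma subst_mult: "subst \<sigma> (p * q) = subst \<sigma> p * subst \<sigma> q"
proof -
  let ?P = "Poly_Mapping.keys p" and ?Q = "Poly_Mapping.keys q"
  have "p * q = (\<Sum>a\<in>?P. Poly_Mapping.single a (Poly_Mapping.lookup p a)) * (\<Sum>b\<in>?Q. Poly_Mapping.single b (Poly_Mapping.lookup q b))"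
    by (subst pm_expand[of p], subst pm_expand[of q]) rule
  also have "\<dots> = (\<Sum>a\<in>?P. \<Sum>b\<in>?Q. Poly_Mapping.single (a + b) (Poly_Mapping.lookup p a * Poly_Mapping.lookup q b))"
    apply (simp add: sum_distrib_left sum_distrib_right mult_single)
    apply (rule sum.swap)
    done
  finally have "subst \<sigma> (p * q) = (\<Sum>a\<in>?P. \<Sum>b\<in>?Q. (Const (Poly_Mapping.lookup p a) * Mon \<sigma> a) * (Const (Poly_Mapping.lookup q b) * Mon \<sigma> b))"
    by (simp add: subst_sum subst_single Const_mult Mon_add ac_simps; (rule sum.swap)?)
  also have "\<dots> = subst \<sigma> p * subst \<sigma> q"
    by (simp add: subst_Mon sum_distrib_left sum_distrib_right; (rule sum.swap)?)
  finally show ?thesis .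
qed

lemma subst_1 [simp]: "subst \<sigma> 1 = 1"
  using subst_single[of \<sigma> 0 1] by simp

lemma rhom_subst: "rhom (subst \<sigma>)"
  by (simp add: rhom_def subst_add subst_mult)

lemma subst_Var [simp]: "subst \<sigma> (Var v) = \<sigma> v"
  by (simp add: Var_def subst_single Mon_def)

lemma subst_Const [simp]: "subst \<sigma> (Const c) = Const c"
  by (simp add: Const_def subst_single)

lemma subst_comp:
  assumes "rhom g" "\<And>c. g (Const c) = Const c"
  shows "g (subst \<sigma> p) = subst (\<lambda>v. g (\<sigma> v)) p"
  by (simp add: subst_def rhom_sum[OF assms(1)] rhom_mult[OF assms(1)] rhom_prod[OF assms(1)]
       rhom_power[OF assms(1)] assms(2))

lemma Var_power: "Var v ^ n = Poly_Mapping.single (Poly_Mapping.single v n) 1"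
  by (induct n) (simp_all add: Var_def mult_single single_add[symmetric] add.commute)

lemma prod_single: "(\<Prod>v\<in>A. Poly_Mapping.single (f v) (1::'k::comm_ring_1)) = Poly_Mapping.single (\<Sum>v\<in>A. f v) 1"
  by (induct A rule: infinite_finite_induct) (simp_all add: mult_single)

lemma subst_Var_id: "subst Var p = p"
proof -
  have "subst Var (Poly_Mapping.single a c) = Poly_Mapping.single a c" for a and c :: 'a
  proof -
    have "Mon Var a = Poly_Mapping.single a (1::'a)"
      unfolding Mon_def Var_power prod_single using pm_expand[of a] by simp
    then show ?thesis unfolding subst_single Const_def by (simp add: mult_single)
  qed
  then show ?thesis
    by (subst (1 2) pm_expand[of p]) (simp add: subst_sum)
qed



definition subr :: "'a::comm_ring_1 set \<Rightarrow> bool" where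
  "subr S \<longleftrightarrow> 0 \<in> S \<and> 1 \<in> S \<and> (\<forall>a\<in>S. \<forall>b\<in>S. a + b \<in> S \<and> a * b \<in> S \<and> - a \<in> S)"

lemma subrD: assumes "subr S"
  shows "0 \<in> S" "1 \<in> S" "a \<in> S \<Longrightarrow> b \<in> S \<Longrightarrow> a + b \<in> S" "a \<in> S \<Longrightarrow> b \<in> S \<Longrightarrow> a * b \<in> S"
    "a \<in> S \<Longrightarrow> - a \<in> S"
  using assms by (auto simp: subr_def)

lemma subr_sum: "subr S \<Longrightarrow> (\<And>x. x \<in> A \<Longrightarrow> g x \<in> S) \<Longrightarrow> sum g A \<in> S"
  by (induct A rule: infinite_finite_induct) (auto intro: subrD)
lemma subr_prod: "subr S \<Longrightarrow> (\<And>x. x \<in> A \<Longrightarrow> g x \<in> S) \<Longrightarrow> prod g A \<in> S"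
  by (induct A rule: infinite_finite_induct) (auto intro: subrD)
lemma subr_power: "subr S \<Longrightarrow> a \<in> S \<Longrightarrow> a ^ n \<in> S"
  by (induct n) (auto intro: subrD)
lemma subr_diff: "subr S \<Longrightarrow> a \<in> S \<Longrightarrow> b \<in> S \<Longrightarrow> a - b \<in> S"
  using subrD[of S] by (metis diff_conv_add_uminus)

lemma keys_add_nat: "Poly_Mapping.keys ((a::var \<Rightarrow>\<^sub>0 nat) + b) = Poly_Mapping.keys a \<union> Poly_Mapping.keys b"
  by (auto simp: in_keys_iff lookup_add)

lemma subr_Rm: "subr (Rm m)"
  unfolding subr_def
proof (intro conjI ballI)
  show "0 \<in> Rm m" by (simp add: Rm_def)
  show "1 \<in> Rm m" by (simp add: Rm_def)
  fix a b :: "'a mpoly" assume a: "a \<in> Rm m" and b: "b \<in> Rm m"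
  show "a + b \<in> Rm m" using a b keys_add[of a b] unfolding Rm_def by blast
  show "- a \<in> Rm m" using a unfolding Rm_def by simp
  show "a * b \<in> Rm m" using a b keys_mult[of a b] unfolding Rm_def by (fastforce simp: keys_add_nat)
qed

lemma Var_Rm: "vidx v \<le> m \<Longrightarrow> Var v \<in> Rm m"
  by (simp add: Rm_def Var_def)

lemma Const_Rm: "Const c \<in> Rm m"
  by (simp add: Rm_def Const_def)

lemma subst_Rm:
  assumes "\<And>v. vidx v \<le> m \<Longrightarrow> \<sigma> v \<in> Rm m" "p \<in> Rm m"
  shows "subst \<sigma> p \<in> Rm m"
  unfolding subst_def
  using assms
  by (intro subr_sum[OF subr_Rm] subrD(4)[OF subr_Rm] Const_Rm subr_prod[OF subr_Rm] subr_power[OF subr_Rm])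
     (auto simp: Rm_def)

section \<open>generated ideals\<close>

lemma gi_sub: assumes "subr S" "G \<subseteq> S" shows "gen_ideal S G \<subseteq> S"
  using assms unfolding gen_ideal_def
  by (auto intro!: subr_sum[OF assms(1)] subrD(4)[OF assms(1)])

lemma gi_gen: assumes "subr S" "g \<in> G" shows "g \<in> gen_ideal S G"
  unfolding gen_ideal_def
  by (rule CollectI, rule exI[of _ "{g}"], rule exI[of _ "\<lambda>_. 1"]) (use assms subrD(2)[OF assms(1)] in auto)

lemma gi_0: "0 \<in> gen_ideal S G"
  unfolding gen_ideal_def by (rule CollectI, rule exI[of _ "{}"]) auto

lemma sum_if_sub: "finite A \<Longrightarrow> B \<subseteq> A \<Longrightarrow> (\<Sum>x\<in>A. if x \<in> B then h x else 0) = sum h B"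
  by (simp add: sum.If_cases Int_absorb1 Int_absorb2)

lemma gi_add: assumes "subr S" "p \<in> gen_ideal S G" "q \<in> gen_ideal S G" shows "p + q \<in> gen_ideal S G"
proof -
  obtain F1 r1 where 1: "finite F1" "F1 \<subseteq> G" "\<forall>g\<in>F1. r1 g \<in> S" "p = (\<Sum>g\<in>F1. r1 g * g)"
    using assms(2) unfolding gen_ideal_def by blast
  obtain F2 r2 where 2: "finite F2" "F2 \<subseteq> G" "\<forall>g\<in>F2. r2 g \<in> S" "q = (\<Sum>g\<in>F2. r2 g * g)"
    using assms(3) unfolding gen_ideal_def by blast
  define r where "r g = (if g \<in> F1 then r1 g else 0) + (if g \<in> F2 then r2 g else 0)" for g
  have e: "r g * g = (if g \<in> F1 then r1 g * g else 0) + (if g \<in> F2 then r2 g * g else 0)" for g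
    unfolding r_def by (simp add: distrib_right)
  have "(\<Sum>g\<in>F1 \<union> F2. r g * g) = (\<Sum>g\<in>F1 \<union> F2. if g \<in> F1 then r1 g * g else 0) + (\<Sum>g\<in>F1 \<union> F2. if g \<in> F2 then r2 g * g else 0)"
    unfolding e by (rule sum.distrib)
  also have "\<dots> = p + q"
    unfolding 1(4) 2(4) using 1(1) 2(1) by (simp add: sum_if_sub)
  finally have pq: "p + q = (\<Sum>g\<in>F1 \<union> F2. r g * g)" by simp
  have rS: "\<forall>g\<in>F1 \<union> F2. r g \<in> S"
  proof
    fix g assume "g \<in> F1 \<union> F2"
    have a: "(if g \<in> F1 then r1 g else 0) \<in> S" using 1(3) subrD(1)[OF assms(1)] by simp
    have b: "(if g \<in> F2 then r2 g else 0) \<in> S" using 2(3) subrD(1)[OF assms(1)] by simp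
    show "r g \<in> S" unfolding r_def by (rule subrD(3)[OF assms(1) a b])
  qed
  show ?thesis unfolding gen_ideal_def
    by (rule CollectI, rule exI[of _ "F1 \<union> F2"], rule exI[of _ r]) (use 1 2 rS pq in blast)
qed

lemma gi_mult: assumes "subr S" "s \<in> S" "p \<in> gen_ideal S G" shows "s * p \<in> gen_ideal S G"
proof -
  obtain F r where 1: "finite F" "F \<subseteq> G" "\<forall>g\<in>F. r g \<in> S" "p = (\<Sum>g\<in>F. r g * g)"
    using assms(3) unfolding gen_ideal_def by blast
  have e: "s * p = (\<Sum>g\<in>F. (s * r g) * g)" unfolding 1(4) sum_distrib_left by (simp add: mult.assoc)
  have rS: "\<forall>g\<in>F. s * r g \<in> S" using 1(3) subrD(4)[OF assms(1) assms(2)] by blast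
  show ?thesis unfolding gen_ideal_def
    by (rule CollectI, rule exI[of _ F], rule exI[of _ "\<lambda>g. s * r g"]) (use 1(1,2) e rS in blast)
qed

lemma gi_sum: assumes "subr S" "\<And>x. x \<in> A \<Longrightarrow> g x \<in> gen_ideal S G" shows "sum g A \<in> gen_ideal S G"
  using assms(2) by (induct A rule: infinite_finite_induct) (auto intro: gi_add[OF assms(1)] gi_0)

lemma gi_image:
  assumes "subr S" "rhom \<phi>" "\<And>p. p \<in> S \<Longrightarrow> \<phi> p \<in> S" "\<And>g. g \<in> G \<Longrightarrow> \<phi> g \<in> gen_ideal S G'"
  shows "\<phi> ` gen_ideal S G \<subseteq> gen_ideal S G'"
proof
  fix y assume "y \<in> \<phi> ` gen_ideal S G"
  then obtain F r where 1: "finite F" "F \<subseteq> G" "\<forall>g\<in>F. r g \<in> S" "y = \<phi> (\<Sum>g\<in>F. r g * g)"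
    unfolding gen_ideal_def by blast
  have "y = (\<Sum>g\<in>F. \<phi> (r g) * \<phi> g)" using 1 by (simp add: rhom_sum[OF assms(2)] rhom_mult[OF assms(2)])
  also have "\<dots> \<in> gen_ideal S G'"
    using 1 assms by (intro gi_sum gi_mult) auto
  finally show "y \<in> gen_ideal S G'" .
qed

lemma gi_diff_power:
  assumes "subr S" "x \<in> S" "y \<in> S" "q \<in> S" "x - y \<in> gen_ideal S G" "x ^ n * q \<in> gen_ideal S G"
  shows "y ^ n * q \<in> gen_ideal S G"
proof -
  have "\<exists>c\<in>S. x ^ n - y ^ n = (x - y) * c" for n
  proof (induct n)
    case 0 show ?case by (rule bexI[of _ 0]) (simp_all add: subrD(1)[OF assms(1)])
  next
    case (Suc n)
    then obtain c where c: "c \<in> S" "x ^ n - y ^ n = (x - y) * c" by blast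
    have "x ^ Suc n - y ^ Suc n = x * (x ^ n - y ^ n) + (x - y) * y ^ n" by (simp add: algebra_simps)
    also have "\<dots> = (x - y) * (x * c + y ^ n)" unfolding c(2) by (simp add: algebra_simps)
    finally have e: "x ^ Suc n - y ^ Suc n = (x - y) * (x * c + y ^ n)" .
    have "x * c + y ^ n \<in> S"
      by (rule subrD(3)[OF assms(1) subrD(4)[OF assms(1) assms(2) c(1)] subr_power[OF assms(1) assms(3)]])
    then show ?case using e by (rule bexI[rotated])
  qed
  then obtain c where c: "c \<in> S" "x ^ n - y ^ n = (x - y) * c" by blast
  have "y ^ n * q = (x ^ n - (x ^ n - y ^ n)) * q" by simp
  also have "\<dots> = x ^ n * q + (- (c * q)) * (x - y)" unfolding c(2) by (simp add: algebra_simps)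
  also have "\<dots> \<in> gen_ideal S G"
  proof (rule gi_add[OF assms(1) assms(6)], rule gi_mult[OF assms(1) _ assms(5)])
    show "- (c * q) \<in> S" by (rule subrD(5)[OF assms(1) subrD(4)[OF assms(1) c(1) assms(4)]])
  qed
  finally show ?thesis .
qed

section \<open>saturation and spectra\<close>

lemma sat_image:
  assumes "rhom \<phi>" "\<And>p. p \<in> S \<Longrightarrow> \<phi> p \<in> S" "\<phi> ` J \<subseteq> J'"
    "\<And>q n. q \<in> S \<Longrightarrow> \<phi> h ^ n * q \<in> J' \<Longrightarrow> h' ^ n * q \<in> J'"
  shows "\<phi> ` sat S J h \<subseteq> sat S J' h'"
proof
  fix y assume "y \<in> \<phi> ` sat S J h"
  then obtain p n where p: "p \<in> S" "h ^ n * p \<in> J" "y = \<phi> p" unfolding sat_def by blast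
  have "\<phi> h ^ n * \<phi> p \<in> J'" using p assms(3) by (metis image_subset_iff rhom_mult rhom_power assms(1))
  then show "y \<in> sat S J' h'" using p assms unfolding sat_def by blast
qed

lemma sat_sub: "sat S J h \<subseteq> S" by (auto simp: sat_def)

lemma prime_spec_map:
  assumes "subr S" "rhom \<phi>" "\<And>p. p \<in> S \<Longrightarrow> \<phi> p \<in> S" "is_prime_ideal S P"
  shows "is_prime_ideal S (spec_map S \<phi> P)"
  using assms subrD[OF assms(1)]
  unfolding is_prime_ideal_def spec_map_def
  by (auto simp: rhom_0 rhom_1 rhom_add rhom_mult)

lemma zs_image:
  assumes "subr S" "rhom \<phi>" "\<And>p. p \<in> S \<Longrightarrow> \<phi> p \<in> S" "\<And>p. p \<in> S \<Longrightarrow> \<phi> (\<phi> p) = p"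
    "A \<subseteq> S" "B \<subseteq> S" "\<phi> ` A \<subseteq> B" "\<phi> ` B \<subseteq> A"
  shows "spec_map S \<phi> ` zero_set S A = zero_set S B"
proof
  show "spec_map S \<phi> ` zero_set S A \<subseteq> zero_set S B"
  proof
    fix Q assume "Q \<in> spec_map S \<phi> ` zero_set S A"
    then obtain P where P: "is_prime_ideal S P" "A \<subseteq> P" "Q = spec_map S \<phi> P"
      unfolding zero_set_def Spec_def by blast
    have "is_prime_ideal S Q" using P prime_spec_map assms by blast
    moreover have "B \<subseteq> Q" using P assms(6,8) unfolding spec_map_def by blast
    ultimately show "Q \<in> zero_set S B" unfolding zero_set_def Spec_def by blast
  qed
  show "zero_set S B \<subseteq> spec_map S \<phi> ` zero_set S A"
  proof
    fix Q assume "Q \<in> zero_set S B"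
    then have Q: "is_prime_ideal S Q" "B \<subseteq> Q" unfolding zero_set_def Spec_def by blast+
    define P where "P = spec_map S \<phi> Q"
    have "is_prime_ideal S P" using Q prime_spec_map assms unfolding P_def by blast
    moreover have "A \<subseteq> P" using Q assms(5,7) unfolding spec_map_def P_def by blast
    moreover have "spec_map S \<phi> P = Q"
      using Q(1) assms(3,4) unfolding P_def spec_map_def is_prime_ideal_def by auto
    ultimately show "Q \<in> spec_map S \<phi> ` zero_set S A" unfolding zero_set_def Spec_def by blast
  qed
qed



section \<open>characteristic 2\<close>

lemma char2_mp: assumes "CHAR('k::comm_ring_1) = 2" shows "(p::'k mpoly) + p = 0"
proof -
  have k: "(of_nat 2 :: 'k) = 0" using of_nat_CHAR[where 'a='k] assms by simp
  have "(of_nat 2 :: 'k mpoly) = 0" by (metis k single_of_nat single_zero)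
  then have "(2 :: 'k mpoly) = 0" by simp
  then show ?thesis by (metis mult_2 mult_zero_left)
qed

lemma char2_poly: assumes "CHAR('k::comm_ring_1) = 2" shows "(p::'k mpoly poly) + p = 0"
proof -
  have k: "(of_nat 2 :: 'k) = 0" using of_nat_CHAR[where 'a='k] assms by simp
  have "(of_nat 2 :: 'k mpoly) = 0" by (metis k single_of_nat single_zero)
  then have "(of_nat 2 :: 'k mpoly poly) = 0" by (simp add: of_nat_poly)
  then have "(2 :: 'k mpoly poly) = 0" by simp
  then show ?thesis by (metis mult_2 mult_zero_left)
qed

lemma char2_mp_cancel: assumes "CHAR('k::comm_ring_1) = 2" shows "(p::'k mpoly) + (p + q) = q"
  using char2_mp[OF assms, of p] by (simp add: add.assoc[symmetric])

lemma char2_mp_minus: assumes "CHAR('k::comm_ring_1) = 2" shows "(p::'k mpoly) - q = p + q"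
proof -
  have "- q = q" using char2_mp[OF assms, of q] by (simp add: eq_neg_iff_add_eq_0)
  then show ?thesis by (metis diff_conv_add_uminus)
qed

lemma single_1_inj: "Poly_Mapping.single a (1::'b::zero_neq_one) = Poly_Mapping.single b 1 \<longleftrightarrow> a = b"
  by (metis lookup_single_eq lookup_single_not_eq zero_neq_one)

lemma Var_inj [simp]: "(Var v :: 'k::comm_ring_1 mpoly) = Var w \<longleftrightarrow> v = w"
  by (metis Var_def single_1_inj)

lemma phi1_simps [simp]:
  "\<phi>1 (Var (X i)) = Var (X i)" "\<phi>1 (Var (Y i)) = Var (Z i)" "\<phi>1 (Var (Z i)) = Var (Y i)"
  by (simp_all add: \<phi>1_def)

lemma phi2_simps [simp]:
  "\<phi>2 (Var (X i)) = Var (X i)" "\<phi>2 (Var (Y i)) = Var (Y i)" "\<phi>2 (Var (Z i)) = Var (Y i) + Var (Z i)"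
  by (simp_all add: \<phi>2_def)

lemma rhom_phi1: "rhom \<phi>1" by (simp add: \<phi>1_def rhom_subst)
lemma rhom_phi2: "rhom \<phi>2" by (simp add: \<phi>2_def rhom_subst)

lemma phi1_add: "\<phi>1 (a + b) = \<phi>1 a + \<phi>1 b" by (rule rhom_add[OF rhom_phi1])
lemma phi2_add: "\<phi>2 (a + b) = \<phi>2 a + \<phi>2 b" by (rule rhom_add[OF rhom_phi2])

lemma phi1_Rm: "p \<in> Rm m \<Longrightarrow> \<phi>1 p \<in> Rm m"
  unfolding \<phi>1_def
proof (rule subst_Rm)
  fix v :: var assume "vidx v \<le> m" then show "\<sigma>1 v \<in> Rm m" by (cases v) (auto intro: Var_Rm)
qed

lemma phi2_Rm: "p \<in> Rm m \<Longrightarrow> \<phi>2 p \<in> Rm m"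
  unfolding \<phi>2_def
proof (rule subst_Rm)
  fix v :: var assume "vidx v \<le> m" then show "\<sigma>2 v \<in> Rm m"
    by (cases v) (auto intro!: Var_Rm subrD(3)[OF subr_Rm])
qed

lemma phi1_invol: "\<phi>1 (\<phi>1 (p::'a::comm_ring_1 mpoly)) = p"
proof -
  have "\<phi>1 (\<phi>1 p) = subst (\<lambda>v. \<phi>1 (\<sigma>1 v)) p"
    unfolding \<phi>1_def by (rule subst_comp) (simp_all add: rhom_subst)
  also have "(\<lambda>v. \<phi>1 (\<sigma>1 v)) = (Var :: var \<Rightarrow> 'a mpoly)"
  proof
    fix v show "\<phi>1 (\<sigma>1 v) = (Var v :: 'a mpoly)" by (cases v) simp_all
  qed
  finally show ?thesis by (simp add: subst_Var_id)
qed

lemma phi2_invol: assumes "CHAR('k::comm_ring_1) = 2" shows "\<phi>2 (\<phi>2 (p :: 'k mpoly)) = p"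
proof -
  have "\<phi>2 (\<phi>2 p) = subst (\<lambda>v. \<phi>2 (\<sigma>2 v)) p"
    unfolding \<phi>2_def by (rule subst_comp) (simp_all add: rhom_subst)
  also have "(\<lambda>v. \<phi>2 (\<sigma>2 v)) = (Var :: var \<Rightarrow> 'k mpoly)"
  proof
    fix v show "\<phi>2 (\<sigma>2 v) = (Var v :: 'k mpoly)"
      by (cases v) (simp_all add: phi2_add char2_mp_cancel[OF assms])
  qed
  finally show ?thesis by (simp add: subst_Var_id)
qed

section \<open>jets\<close>

lemma rhom_map_poly:
  assumes "rhom f" shows "rhom (map_poly f)"
proof -
  have f0: "f 0 = 0" by (rule rhom_0[OF assms])
  have add: "map_poly f (p + q) = map_poly f p + map_poly f q" for p q
    by (rule poly_eqI) (simp add: coeff_map_poly f0 rhom_add[OF assms])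
  have mult: "map_poly f (p * q) = map_poly f p * map_poly f q" for p q
    by (rule poly_eqI) (simp add: coeff_map_poly f0 coeff_mult rhom_sum[OF assms] rhom_mult[OF assms])
  show ?thesis unfolding rhom_def using add mult rhom_1[OF assms] by simp
qed

lemma map_poly_arc:
  assumes "rhom f" shows "map_poly f (arc c m) = (\<Sum>i\<le>m. monom (f (Var (c i))) i)"
  unfolding arc_def by (simp add: rhom_sum[OF rhom_map_poly[OF assms]] map_poly_monom rhom_0[OF assms])

lemma map_poly_fpoly:
  assumes "rhom f" shows "map_poly f (fpoly a b c) = fpoly (map_poly f a) (map_poly f b) (map_poly f c)"
  using rhom_map_poly[OF assms]
  unfolding fpoly_def by (simp add: rhom_add rhom_mult rhom_power)

lemma fj_fix:
  assumes "rhom f" "map_poly f (fpoly (arc X m) (arc Y m) (arc Z m)) = fpoly (arc X m) (arc Y m) (arc Z m)"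
  shows "f (fj m j) = fj m j"
proof -
  have "f (fj m j) = coeff (map_poly f (fpoly (arc X m) (arc Y m) (arc Z m))) j"
    unfolding fj_def by (simp add: coeff_map_poly rhom_0[OF assms(1)])
  then show ?thesis using assms(2) by (simp add: fj_def)
qed

lemma fpoly_swap: "fpoly a c b = fpoly a b (c::'a::comm_ring_1)"
  unfolding fpoly_def power2_eq_square by (simp add: ac_simps)

lemma fpoly_shift: "fpoly a b (b + c) = fpoly a b c + ((b^3 + b^2 * c) + (b^3 + b^2 * (c::'a::comm_ring_1)))"
  unfolding fpoly_def power2_eq_square power3_eq_cube by (simp add: algebra_simps)

lemma phi1_fj: "\<phi>1 (fj m j :: 'k::comm_ring_1 mpoly) = fj m j"
proof (rule fj_fix[OF rhom_phi1])
  have "map_poly \<phi>1 (arc X m) = (arc X m :: 'k mpoly poly)" "map_poly \<phi>1 (arc Y m) = (arc Z m :: 'k mpoly poly)"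
    "map_poly \<phi>1 (arc Z m) = (arc Y m :: 'k mpoly poly)"
    unfolding map_poly_arc[OF rhom_phi1] by (simp_all add: arc_def)
  then show "map_poly \<phi>1 (fpoly (arc X m) (arc Y m) (arc Z m)) = (fpoly (arc X m) (arc Y m) (arc Z m) :: 'k mpoly poly)"
    by (simp add: map_poly_fpoly[OF rhom_phi1] fpoly_swap)
qed

lemma phi2_fj: assumes "CHAR('k::comm_ring_1) = 2" shows "\<phi>2 (fj m j :: 'k mpoly) = fj m j"
proof (rule fj_fix[OF rhom_phi2])
  have "map_poly \<phi>2 (arc X m) = (arc X m :: 'k mpoly poly)" "map_poly \<phi>2 (arc Y m) = (arc Y m :: 'k mpoly poly)"
    "map_poly \<phi>2 (arc Z m) = (arc Y m + arc Z m :: 'k mpoly poly)"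
    unfolding map_poly_arc[OF rhom_phi2] by (simp_all add: arc_def add_monom[symmetric] sum.distrib)
  then show "map_poly \<phi>2 (fpoly (arc X m) (arc Y m) (arc Z m)) = (fpoly (arc X m) (arc Y m) (arc Z m) :: 'k mpoly poly)"
    by (simp add: map_poly_fpoly[OF rhom_phi2] fpoly_shift char2_poly[OF assms])
qed

definition PS :: "nat \<Rightarrow> 'k::comm_ring_1 mpoly poly set" where
  "PS m = {p. \<forall>i. coeff p i \<in> Rm m}"

lemma PS_add: "p \<in> PS m \<Longrightarrow> q \<in> PS m \<Longrightarrow> p + q \<in> PS m"
  by (simp add: PS_def subrD(3)[OF subr_Rm])
lemma PS_mult: "p \<in> PS m \<Longrightarrow> q \<in> PS m \<Longrightarrow> p * q \<in> PS m"
  unfolding PS_def by (auto simp: coeff_mult intro!: subr_sum[OF subr_Rm] subrD(4)[OF subr_Rm])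
lemma PS_arc: "(\<And>i. vidx (c i) = i) \<Longrightarrow> arc c m \<in> PS m"
  unfolding PS_def arc_def
  by (auto simp: coeff_sum coeff_monom intro!: subr_sum[OF subr_Rm] Var_Rm subrD(1)[OF subr_Rm])

lemma fj_Rm: "fj m j \<in> Rm m"
proof -
  have "fpoly (arc X m) (arc Y m) (arc Z m) \<in> PS m"
    unfolding fpoly_def power2_eq_square
    by (intro PS_add PS_mult PS_arc) simp_all
  then show ?thesis unfolding fj_def PS_def by blast
qed

section \<open>ideal inclusions\<close>

lemma gm1: "g \<in> G \<Longrightarrow> g \<in> gen_ideal (Rm m) G"
  by (rule gi_gen[OF subr_Rm])
lemma gm2: "a \<in> G \<Longrightarrow> b \<in> G \<Longrightarrow> a + b \<in> gen_ideal (Rm m) G"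
  by (rule gi_add[OF subr_Rm gm1 gm1])

lemma Fm_Rm: "Fm m \<subseteq> Rm m"
  unfolding Fm_def using fj_Rm by blast

lemma VR: "vidx v \<le> m \<Longrightarrow> Var v \<in> Rm m" by (rule Var_Rm)

lemma YZ_Rm: "1 \<le> m \<Longrightarrow> Var (Y 1) + Var (Z 1) \<in> Rm m"
  by (rule subrD(3)[OF subr_Rm]) (simp_all add: VR)

lemma Im0_Rm: "2 \<le> m \<Longrightarrow> Im0 m \<subseteq> Rm m"
  unfolding Im0_def by (rule gi_sub[OF subr_Rm]) (use Fm_Rm in \<open>auto simp: VR\<close>)

lemma Im_sat_Rm: "Im1 m \<subseteq> Rm m" "Im2 m \<subseteq> Rm m" "Im3 m \<subseteq> Rm m"
  unfolding Im1_def Im2_def Im3_def by (rule sat_sub)+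

lemma phi1_Im0: "\<phi>1 ` Im0 m \<subseteq> Im0 m"
  unfolding Im0_def
  by (rule gi_image[OF subr_Rm rhom_phi1 phi1_Rm]) (auto simp: Fm_def phi1_fj intro: gm1)

lemma phi1_Jm1: "\<phi>1 ` Jm1 m \<subseteq> Jm2 m"
  unfolding Jm1_def Jm2_def
  by (rule gi_image[OF subr_Rm rhom_phi1 phi1_Rm]) (auto simp: Fm_def phi1_fj intro: gm1)

lemma phi1_Jm2: "\<phi>1 ` Jm2 m \<subseteq> Jm1 m"
  unfolding Jm1_def Jm2_def
  by (rule gi_image[OF subr_Rm rhom_phi1 phi1_Rm]) (auto simp: Fm_def phi1_fj intro: gm1)

lemma phi1_Jm3: "\<phi>1 ` Jm3 m \<subseteq> Jm3 m"
  unfolding Jm3_def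
  by (rule gi_image[OF subr_Rm rhom_phi1 phi1_Rm]) (auto simp: Fm_def phi1_fj phi1_add add.commute intro: gm1)

lemma phi1_Im1: "\<phi>1 ` Im1 m \<subseteq> Im2 m"
  unfolding Im1_def Im2_def
  by (rule sat_image[OF rhom_phi1 phi1_Rm phi1_Jm1]) simp_all

lemma phi1_Im2: "\<phi>1 ` Im2 m \<subseteq> Im1 m"
  unfolding Im1_def Im2_def
  by (rule sat_image[OF rhom_phi1 phi1_Rm phi1_Jm2]) simp_all

lemma phi1_Im3: assumes "CHAR('k::comm_ring_1) = 2" "1 \<le> m" shows "\<phi>1 ` Im3 m \<subseteq> (Im3 m :: 'k mpoly set)"
  unfolding Im3_def
proof (rule sat_image[OF rhom_phi1 phi1_Rm phi1_Jm3])
  fix q n assume q: "q \<in> Rm m" and h: "\<phi>1 (Var (Y 1)) ^ n * q \<in> (Jm3 m :: 'k mpoly set)"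
  show "Var (Y 1) ^ n * q \<in> Jm3 m"
    unfolding Jm3_def
  proof (rule gi_diff_power[OF subr_Rm _ _ q])
    show "Var (Z 1) \<in> Rm m" "Var (Y 1) \<in> Rm m" using assms by (simp_all add: VR)
    show "(Var (Z 1) - Var (Y 1) :: 'k mpoly) \<in> gen_ideal (Rm m) ({Var (X 0), Var (X 1), Var (Y 0), Var (Z 0), Var (Y 1) + Var (Z 1)} \<union> Fm m)"
      unfolding char2_mp_minus[OF assms(1)] by (rule gm1) (simp add: add.commute)
    show "Var (Z 1) ^ n * q \<in> gen_ideal (Rm m) ({Var (X 0), Var (X 1), Var (Y 0), Var (Z 0), Var (Y 1) + Var (Z 1)} \<union> Fm m)"
      using h by (simp add: Jm3_def)
  qed
qed

lemma phi2_Im0: assumes "CHAR('k::comm_ring_1) = 2" shows "\<phi>2 ` Im0 m \<subseteq> (Im0 m :: 'k mpoly set)"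
  unfolding Im0_def
  by (rule gi_image[OF subr_Rm rhom_phi2 phi2_Rm]) (auto simp: Fm_def phi2_fj[OF assms] intro: gm1 gm2)

lemma phi2_Jm1: assumes "CHAR('k::comm_ring_1) = 2" shows "\<phi>2 ` Jm1 m \<subseteq> (Jm1 m :: 'k mpoly set)"
  unfolding Jm1_def
  by (rule gi_image[OF subr_Rm rhom_phi2 phi2_Rm]) (auto simp: Fm_def phi2_fj[OF assms] intro: gm1 gm2)

lemma phi2_Jm2: assumes "CHAR('k::comm_ring_1) = 2" shows "\<phi>2 ` Jm2 m \<subseteq> (Jm3 m :: 'k mpoly set)"
  unfolding Jm2_def Jm3_def
  by (rule gi_image[OF subr_Rm rhom_phi2 phi2_Rm]) (auto simp: Fm_def phi2_fj[OF assms] intro: gm1 gm2)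

lemma phi2_Jm3: assumes "CHAR('k::comm_ring_1) = 2" shows "\<phi>2 ` Jm3 m \<subseteq> (Jm2 m :: 'k mpoly set)"
  unfolding Jm2_def Jm3_def
  by (rule gi_image[OF subr_Rm rhom_phi2 phi2_Rm])
     (auto simp: Fm_def phi2_fj[OF assms] phi2_add char2_mp_cancel[OF assms] intro: gm1 gm2)

lemma phi2_Im2: assumes "CHAR('k::comm_ring_1) = 2" shows "\<phi>2 ` Im2 m \<subseteq> (Im3 m :: 'k mpoly set)"
  unfolding Im2_def Im3_def
  by (rule sat_image[OF rhom_phi2 phi2_Rm phi2_Jm2[OF assms]]) simp_all

lemma phi2_Im3: assumes "CHAR('k::comm_ring_1) = 2" shows "\<phi>2 ` Im3 m \<subseteq> (Im2 m :: 'k mpoly set)"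
  unfolding Im2_def Im3_def
  by (rule sat_image[OF rhom_phi2 phi2_Rm phi2_Jm3[OF assms]]) simp_all

lemma phi2_Im1: assumes "CHAR('k::comm_ring_1) = 2" "1 \<le> m" shows "\<phi>2 ` Im1 m \<subseteq> (Im1 m :: 'k mpoly set)"
  unfolding Im1_def
proof (rule sat_image[OF rhom_phi2 phi2_Rm phi2_Jm1[OF assms(1)]])
  fix q n assume q: "q \<in> Rm m" and h: "\<phi>2 (Var (Z 1)) ^ n * q \<in> (Jm1 m :: 'k mpoly set)"
  show "Var (Z 1) ^ n * q \<in> Jm1 m"
    unfolding Jm1_def
  proof (rule gi_diff_power[OF subr_Rm _ _ q])
    show "Var (Y 1) + Var (Z 1) \<in> Rm m" using YZ_Rm[OF assms(2)] .
    show "Var (Z 1) \<in> Rm m" using assms by (simp add: VR)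
    show "Var (Y 1) + Var (Z 1) - Var (Z 1) \<in> gen_ideal (Rm m) ({Var (X 0), Var (X 1), Var (Y 0), Var (Y 1), Var (Z 0)} \<union> Fm m)"
      by simp (rule gm1, simp)
    show "(Var (Y 1) + Var (Z 1)) ^ n * q \<in> gen_ideal (Rm m) ({Var (X 0), Var (X 1), Var (Y 0), Var (Y 1), Var (Z 0)} \<union> Fm m)"
      using h by (simp add: Jm1_def)
  qed
qed

lemma Zm_eqs: "Zm m 0 = zero_set (Rm m) (Im0 m)" "Zm m 1 = zero_set (Rm m) (Im1 m)"
  "Zm m 2 = zero_set (Rm m) (Im2 m)" "Zm m 3 = zero_set (Rm m) (Im3 m)"
  by (simp_all add: Zm_def)

theorem lemma3p5:
  fixes m :: nat
  assumes "CHAR('k::alg_closed_field) = 2"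
    and "m \<ge> 5"
  shows "\<psi>1 m ` (Zm m 0 :: 'k mpoly set set) = Zm m 0 \<and>
         \<psi>1 m ` (Zm m 1 :: 'k mpoly set set) = Zm m 2 \<and>
         \<psi>1 m ` (Zm m 2 :: 'k mpoly set set) = Zm m 1 \<and>
         \<psi>1 m ` (Zm m 3 :: 'k mpoly set set) = Zm m 3 \<and>
         \<psi>2 m ` (Zm m 0 :: 'k mpoly set set) = Zm m 0 \<and>
         \<psi>2 m ` (Zm m 1 :: 'k mpoly set set) = Zm m 1 \<and>
         \<psi>2 m ` (Zm m 2 :: 'k mpoly set set) = Zm m 3 \<and>
         \<psi>2 m ` (Zm m 3 :: 'k mpoly set set) = Zm m 2"
proof -
  have m1: "1 \<le> m" and m2: "2 \<le> m" using assms(2) by simp_all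
  have i1: "\<And>p. p \<in> Rm m \<Longrightarrow> \<phi>1 (\<phi>1 p) = (p :: 'k mpoly)" by (rule phi1_invol)
  have i2: "\<And>p. p \<in> Rm m \<Longrightarrow> \<phi>2 (\<phi>2 p) = (p :: 'k mpoly)" by (rule phi2_invol[OF assms(1)])
  have r1: "\<And>p. p \<in> Rm m \<Longrightarrow> \<phi>1 p \<in> (Rm m :: 'k mpoly set)" by (rule phi1_Rm)
  have r2: "\<And>p. p \<in> Rm m \<Longrightarrow> \<phi>2 p \<in> (Rm m :: 'k mpoly set)" by (rule phi2_Rm)
  have z1: "spec_map (Rm m) \<phi>1 ` zero_set (Rm m) A = zero_set (Rm m) B"
    if "A \<subseteq> Rm m" "B \<subseteq> Rm m" "\<phi>1 ` A \<subseteq> B" "\<phi>1 ` B \<subseteq> A" for A B :: "'k mpoly set"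
    by (rule zs_image[OF subr_Rm rhom_phi1]) (rule r1 i1 that; assumption)+
  have z2: "spec_map (Rm m) \<phi>2 ` zero_set (Rm m) A = zero_set (Rm m) B"
    if "A \<subseteq> Rm m" "B \<subseteq> Rm m" "\<phi>2 ` A \<subseteq> B" "\<phi>2 ` B \<subseteq> A" for A B :: "'k mpoly set"
    by (rule zs_image[OF subr_Rm rhom_phi2]) (rule r2 i2 that; assumption)+
  note R = Im0_Rm[OF m2] Im_sat_Rm
  show ?thesis unfolding \<psi>1_def \<psi>2_def Zm_eqs
    using z1[OF R(1) R(1) phi1_Im0 phi1_Im0]
      z1[OF R(2) R(3) phi1_Im1 phi1_Im2]
      z1[OF R(3) R(2) phi1_Im2 phi1_Im1]
      z1[OF R(4) R(4) phi1_Im3[OF assms(1) m1] phi1_Im3[OF assms(1) m1]]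
      z2[OF R(1) R(1) phi2_Im0[OF assms(1)] phi2_Im0[OF assms(1)]]
      z2[OF R(2) R(2) phi2_Im1[OF assms(1) m1] phi2_Im1[OF assms(1) m1]]
      z2[OF R(3) R(4) phi2_Im2[OF assms(1)] phi2_Im3[OF assms(1)]]
      z2[OF R(4) R(3) phi2_Im3[OF assms(1)] phi2_Im2[OF assms(1)]]
    by blast
qed

end
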